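(* Let $n,d\geq 1$. For every $n$-tuple $\mathbf{Q}=(Q_1,\dots,Q_n)$ of distinct points in $\mathbb{E}^d$ and every set $T$ of unordered pairs $\{i,j\}\subseteq\{1,\dots,n\}$, $$\dim T\leq\min\big(n-c(T)-1,\;d-1\big).$$ Moreover, the set of $n$-tuples $\mathbf{Q}$ for which equality holds for every such $T$ is open and dense in $(\mathbb{E}^d)^n$, and every $n$-tuple in this set is in simple position.
   Context: $\mathbb{E}^d$ is embedded in real projective space $\mathbb{P}^d$, with ideal hyperplane $h_\infty=\mathbb{P}^d\setminus\mathbb{E}^d$. For $i\neq j$, $p_{ij}$ is the ideal point of the line $Q_iQ_j$, i.e. the intersection of its projective closure with $h_\infty$. For a set $T$ of unordered pairs $\{i,j\}$, $\dim T$ is the projective dimension of the subspace of $h_\infty$ spanned by $\{p_{ij}:\{i,j\}\in T\}$ (with $\dim\emptyset=-1$), and $c(T)$ is the number of connected components of the graph with vertex set $\{1,\dots,n\}$ and edge set $T$ (isolated vertices counting as components). $\mathbf{Q}$ is in simple position if every subset of at most $d+1$ of the points $Q_1,\dots,Q_n$ is affinely independent. *)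

theory Defs
  imports "HOL-Analysis.Analysis"
begin

text \<open>Tuples Q = (Q_1,...,Q_n) of points of E^d are elements of (real^'d)^'n,
  with n = CARD('n) and d = CARD('d).  A set T of unordered pairs {i,j}, i \<noteq> j,
  is a set of 2-element index sets.\<close>

definition is_pair_set :: "'n set set \<Rightarrow> bool" where
  "is_pair_set T \<longleftrightarrow> (\<forall>e\<in>T. \<exists>i j. i \<noteq> j \<and> e = {i, j})"

text \<open>The ideal point p_ij of line Q_i Q_j is the projective point of h_infinity
  represented by the direction vector Q_j - Q_i; the projective dimension of the
  span of the p_ij is the linear dimension of the span of the direction vectors minus 1.\<close>

definition ideal_dim :: "(real^'d)^'n \<Rightarrow> 'n set set \<Rightarrow> int" where
  "ideal_dim Q T = int (dim {Q $ j - Q $ i | i j. i \<noteq> j \<and> {i, j} \<in> T}) - 1"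

text \<open>Edge relation of the graph on vertex set 'n with edge set T; c(T) is the
  number of classes of its reflexive-transitive closure (connected components,
  isolated vertices included).\<close>

definition edge_rel :: "'n set set \<Rightarrow> ('n \<times> 'n) set" where
  "edge_rel T = {(i, j). i \<noteq> j \<and> {i, j} \<in> T}"

definition num_components :: "'n set set \<Rightarrow> nat" where
  "num_components T = card (UNIV // (edge_rel T)\<^sup>*)"

definition simple_position :: "(real^'d)^'n \<Rightarrow> bool" where
  "simple_position Q \<longleftrightarrow>
     (\<forall>I. card I \<le> CARD('d) + 1 \<longrightarrow> \<not> affine_dependent ((\<lambda>i. Q $ i) ` I))"

end

theory Submission
  imports Defs
begin

definition fm :: "(real^'d)^'n \<Rightarrow> real^'n \<Rightarrow> real^'d" where
  "fm Q x = (\<Sum>i\<in>UNIV. (x$i) *\<^sub>R Q$i)"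

lemma linear_fm: "linear (fm Q)"
  by (rule linearI) (simp_all add: fm_def scaleR_add_left sum.distrib scaleR_sum_right)

lemma fm_axis: "fm Q (axis j 1 - axis i 1) = Q$j - Q$i"
proof -
  have a: "fm Q (axis k 1) = Q$k" for k
  proof -
    have "fm Q (axis k 1) = (\<Sum>m\<in>UNIV. (if m = k then Q$m else 0))"
      unfolding fm_def by (rule sum.cong) (auto simp: axis_def)
    then show ?thesis by simp
  qed
  show ?thesis using linear_diff[OF linear_fm, of Q "axis j 1" "axis i 1"] a by simp
qed

lemma fm_diff: "fm A x - fm B x = fm (A - B) x"
  by (simp add: fm_def sum_subtractf scaleR_diff_right)

lemma fm_add: "fm (A + B) x = fm A x + fm B x"
  by (simp add: fm_def sum.distrib scaleR_add_right)

lemma fm_scale: "fm (c *\<^sub>R A) x = c *\<^sub>R fm A x"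
  by (simp add: fm_def scaleR_sum_right mult.commute)

lemma norm_fm: "norm (fm A x) \<le> real CARD('n) * (norm x * norm A)"
  for A :: "(real^'d)^'n"
proof -
  have "norm (fm A x) \<le> (\<Sum>i\<in>UNIV. norm ((x$i) *\<^sub>R A$i))"
    unfolding fm_def by (rule norm_sum)
  also have "\<dots> \<le> (\<Sum>i\<in>(UNIV::'n set). norm x * norm A)"
    by (rule sum_mono) (auto intro!: mult_mono component_le_norm_cart Finite_Cartesian_Product.norm_nth_le)
  finally show ?thesis by simp
qed

lemma bounded_linear_fm: "bounded_linear (fm Q)"
  using linear_fm linear_conv_bounded_linear by blast

definition EE :: "'n set set \<Rightarrow> (real^'n) set" where
  "EE T = {axis j 1 - axis i 1 | i j. i \<noteq> j \<and> {i, j} \<in> T}"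

definition WW :: "'n set set \<Rightarrow> (real^'n) set" where
  "WW T = span (EE T)"

lemma ideal_dim_fm: "ideal_dim Q T = int (dim (fm Q ` WW T)) - 1"
proof -
  have 1: "{Q $ j - Q $ i | i j. i \<noteq> j \<and> {i, j} \<in> T} = (\<lambda>(i,j). Q$j - Q$i) ` {(i,j). i \<noteq> j \<and> {i, j} \<in> T}"
    by auto
  have 2: "EE T = (\<lambda>(i,j). axis j 1 - axis i 1) ` {(i,j). i \<noteq> j \<and> {i, j} \<in> T}"
    unfolding EE_def by auto
  have "{Q $ j - Q $ i | i j. i \<noteq> j \<and> {i, j} \<in> T} = fm Q ` EE T"
    unfolding 1 2 image_image by (rule image_cong) (auto simp: fm_axis)
  moreover have "dim (fm Q ` WW T) = dim (fm Q ` EE T)"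
    proof -
    have "fm Q ` WW T = span (fm Q ` EE T)" unfolding WW_def by (rule linear_span_image[OF linear_fm, symmetric])
    then show ?thesis by (simp only: dim_span)
  qed
  ultimately show ?thesis unfolding ideal_dim_def by simp
qed

lemma orth_axis: "orthogonal (axis j 1 - axis i 1) y \<longleftrightarrow> y$j = y$i"
  for y :: "real^'n"
  by (simp add: orthogonal_def inner_diff_left inner_axis')

lemma perp_WW: "{y. \<forall>x\<in>WW T. orthogonal x y} = {y::real^'n. \<forall>(i,j)\<in>(edge_rel T)\<^sup>*. y$i = y$j}"
proof (intro set_eqI iffI)
  fix y :: "real^'n"
  assume a: "y \<in> {y. \<forall>x\<in>WW T. orthogonal x y}"
  have e: "y$i = y$j" if "(i,j) \<in> edge_rel T" for i j
  proof -
    have "axis j 1 - axis i 1 \<in> EE T" using that unfolding EE_def edge_rel_def by blast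
    then have "axis j 1 - axis i 1 \<in> WW T" unfolding WW_def by (rule span_base)
    then have "orthogonal (axis j 1 - axis i 1) y" using a by blast
    then show ?thesis using orth_axis[of j i y] by simp
  qed
  have "y$i = y$j" if "(i,j) \<in> (edge_rel T)\<^sup>*" for i j
    using that
  proof (induct rule: rtrancl_induct)
    case base then show ?case by (rule refl)
  next
    case (step b c) then show ?case using e[of b c] by simp
  qed
  then show "y \<in> {y::real^'n. \<forall>(i,j)\<in>(edge_rel T)\<^sup>*. y$i = y$j}" by blast
next
  fix y :: "real^'n"
  assume a: "y \<in> {y::real^'n. \<forall>(i,j)\<in>(edge_rel T)\<^sup>*. y$i = y$j}"
  have o: "orthogonal y x" if "x \<in> EE T" for x
  proof -
    have "\<exists>i j. x = axis j 1 - axis i 1 \<and> i \<noteq> j \<and> {i,j} \<in> T" using that unfolding EE_def by (simp only: mem_Collect_eq)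
    then obtain i j where ij: "i \<noteq> j" "{i,j} \<in> T" "x = axis j 1 - axis i 1" by (elim exE conjE) simp
    then have "(i,j) \<in> edge_rel T" unfolding edge_rel_def by blast
    then have "(i,j) \<in> (edge_rel T)\<^sup>*" by (rule r_into_rtrancl)
    then have "y$i = y$j" using a by auto
    then have "orthogonal x y" using ij(3) orth_axis[of j i y] by simp
    then show ?thesis by (simp add: orthogonal_commute)
  qed
  have "orthogonal x y" if "x \<in> WW T" for x
  proof -
    have "orthogonal y x" using that unfolding WW_def by (rule orthogonal_to_span) (rule o)
    then show ?thesis by (simp add: orthogonal_commute)
  qed
  then show "y \<in> {y. \<forall>x\<in>WW T. orthogonal x y}" by blast
qed

lemma equiv_edge: "equiv UNIV ((edge_rel T)\<^sup>*)"
proof -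
  have "sym (edge_rel T)" unfolding edge_rel_def sym_def by (auto simp: insert_commute)
  then show ?thesis unfolding equiv_def by (auto simp: refl_rtrancl sym_rtrancl trans_rtrancl)
qed

definition ind :: "'n set \<Rightarrow> real^'n" where
  "ind C = (\<chi> k. if k \<in> C then 1 else 0)"

lemma dim_const_classes:
  fixes R :: "('n::finite \<times> 'n) set"
  assumes eq: "equiv UNIV R"
  shows "dim {y::real^'n. \<forall>(i,j)\<in>R. y$i = y$j} = card (UNIV // R)"
proof -
  let ?V = "{y::real^'n. \<forall>(i,j)\<in>R. y$i = y$j}"
  let ?B = "ind ` (UNIV // R)"
  have ne: "C \<noteq> {}" if "C \<in> UNIV // R" for C
    using that eq by (metis in_quotient_imp_non_empty)
  have disj: "C \<inter> D = {}" if "C \<in> UNIV // R" "D \<in> UNIV // R" "C \<noteq> D" for C D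
    using that eq quotient_disj by blast
  have injind: "inj_on ind (UNIV // R)"
  proof (rule inj_onI)
    fix C D assume C: "C \<in> UNIV // R" and D: "D \<in> UNIV // R" and e: "ind C = ind D"
    obtain k where k: "k \<in> C" using ne[OF C] by blast
    then have "ind C $ k = 1" by (simp add: ind_def)
    moreover have "ind D $ k = (if k \<in> D then 1 else 0)" by (simp add: ind_def)
    ultimately have "k \<in> D" using e by (metis one_neq_zero)
    then show "C = D" using disj[OF C D] k by blast
  qed
  have indep: "independent ?B"
  proof (rule pairwise_orthogonal_independent)
    show "pairwise orthogonal ?B"
      unfolding pairwise_def
    proof clarify
      fix C D assume C: "C \<in> UNIV // R" and D: "D \<in> UNIV // R" and "ind C \<noteq> ind D"
      then have "C \<noteq> D" by blast
      then have d: "C \<inter> D = {}" using disj C D by blast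
      have "ind C \<bullet> ind D = (\<Sum>k\<in>UNIV. (if k \<in> C then 1 else 0) * (if k \<in> D then 1 else 0))"
        by (simp add: inner_vec_def ind_def)
      also have "\<dots> = 0" by (rule sum.neutral) (use d in auto)
      finally show "orthogonal (ind C) (ind D)" by (simp add: orthogonal_def)
    qed
    show "0 \<notin> ?B"
    proof
      assume "0 \<in> ?B"
      then obtain C where C: "C \<in> UNIV // R" "ind C = 0" by auto
      obtain k where "k \<in> C" using ne[OF C(1)] by blast
      then have "ind C $ k = 1" by (simp add: ind_def)
      then show False using C by simp
    qed
  qed
  have BV: "?B \<subseteq> ?V"
  proof clarify
    fix C i j assume C: "C \<in> UNIV // R" and ij: "(i,j) \<in> R"
    obtain a where a: "C = R``{a}" using C by (auto elim: quotientE)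
    have "R``{i} = R``{j}" using equiv_class_eq_iff[OF eq, of i j] ij by simp
    then have "i \<in> C \<longleftrightarrow> j \<in> C"
      using a equiv_class_eq_iff[OF eq, of a i] equiv_class_eq_iff[OF eq, of a j] by simp
    then show "ind C $ i = ind C $ j" by (simp add: ind_def)
  qed
  have VB: "?V \<subseteq> span ?B"
  proof
    fix y assume y: "y \<in> ?V"
    define rep where "rep C = (SOME k. k \<in> C)" for C :: "'n set"
    have "y = (\<Sum>C\<in>UNIV // R. y$(rep C) *\<^sub>R ind C)"
    proof (subst vec_eq_iff, intro allI)
      fix k
      have cls: "C = R``{k} \<longleftrightarrow> k \<in> C" if "C \<in> UNIV // R" for C
      proof -
        obtain a where a: "C = R``{a}" using \<open>C \<in> UNIV // R\<close> by (auto elim: quotientE)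
        show ?thesis using a equiv_class_eq_iff[OF eq, of a k] by auto
      qed
      have kc: "R``{k} \<in> UNIV // R" by (simp add: quotientI)
      have "(\<Sum>C\<in>UNIV // R. y$(rep C) *\<^sub>R ind C) $ k = (\<Sum>C\<in>UNIV // R. if C = R``{k} then y$(rep C) else 0)"
        by (rule trans[OF sum_component sum.cong]) (auto simp: ind_def cls)
      also have "\<dots> = y$(rep (R``{k}))" using kc by simp
      also have "\<dots> = y$k"
      proof -
        have "rep (R``{k}) \<in> R``{k}" unfolding rep_def using ne[OF kc] by (rule some_in_eq[THEN iffD2])
        then have "(k, rep (R``{k})) \<in> R" by simp
        then show ?thesis using y by auto
      qed
      finally show "y $ k = (\<Sum>C\<in>UNIV // R. y$(rep C) *\<^sub>R ind C) $ k" by simp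
    qed
    also have "\<dots> \<in> span ?B"
      by (intro span_sum span_scale span_base) auto
    finally show "y \<in> span ?B" .
  qed
  have sV: "subspace ?V" by (auto simp: subspace_def case_prod_unfold)
  have "span ?B = ?V" by (rule span_subspace[OF BV VB sV])
  then have "dim ?V = dim ?B" using dim_span[of ?B] by simp
  also have "\<dots> = card ?B" using indep by (rule dim_eq_card_independent)
  also have "\<dots> = card (UNIV // R)" using injind by (rule card_image)
  finally show ?thesis .
qed

lemma dim_WW: "int (dim (WW T)) = int CARD('n) - int (num_components T)"
  for T :: "'n::finite set set"
proof -
  have "dim {y. \<forall>x\<in>WW T. orthogonal x y} + dim (WW T) = dim (UNIV :: (real^'n) set)"
    using dim_subspace_orthogonal_to_vectors[of "WW T" UNIV] unfolding WW_def
    by (simp add: subspace_span)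
  moreover have "dim (UNIV :: (real^'n) set) = CARD('n)"
    by simp
  moreover have "dim {y. \<forall>x\<in>WW T. orthogonal x y} = num_components T"
    unfolding perp_WW num_components_def by (rule dim_const_classes[OF equiv_edge])
  ultimately show ?thesis by linarith
qed

lemma sp_eq: "subspace S \<Longrightarrow> span S = S" by (simp add: span_eq_iff)

lemma fm_0: "fm Q 0 = 0" using linear_0[OF linear_fm] .

lemma fm_ub: "dim (fm Q ` W) \<le> min (dim W) CARD('d)"
  for Q :: "(real^'d)^'n"
  using dim_image_le[OF linear_fm, of Q W] dim_subset_UNIV_cart[of "fm Q ` W"] by simp

lemma lsc:
  fixes Q :: "(real^'d)^'n"
  assumes W: "subspace W"
  shows "eventually (\<lambda>Q'. dim (fm Q ` W) \<le> dim (fm Q' ` W)) (nhds Q)"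
proof -
  define K where "K = {x\<in>W. fm Q x = 0}"
  define U where "U = {x\<in>W. \<forall>y\<in>K. orthogonal y x}"
  have sK: "subspace K" unfolding K_def using W
    by (auto simp: subspace_def linear_add[OF linear_fm] linear_scale[OF linear_fm] fm_0)
  have sU: "subspace U" unfolding U_def using W
    by (auto simp: subspace_def orthogonal_clauses)
  have UW: "U \<subseteq> W" unfolding U_def by blast
  have img: "fm Q ` W \<subseteq> fm Q ` U"
  proof
    fix z assume "z \<in> fm Q ` W"
    then obtain x where x: "x \<in> W" "z = fm Q x" by blast
    obtain y zz where y: "y \<in> span K" and o: "\<And>w. w \<in> span K \<Longrightarrow> orthogonal zz w" and xyz: "x = y + zz"
      using orthogonal_subspace_decomp_exists[of K x] by blast
    have yK: "y \<in> K" using y sp_eq[OF sK] by simp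
    then have "y \<in> W" "fm Q y = 0" unfolding K_def by auto
    then have "zz \<in> W" using xyz x(1) W
      by (metis add_diff_cancel_left' subspace_diff)
    moreover have "\<forall>w\<in>K. orthogonal w zz" using o sp_eq[OF sK] by (simp add: orthogonal_commute)
    ultimately have "zz \<in> U" unfolding U_def by blast
    moreover have "fm Q zz = z" using x(2) xyz \<open>fm Q y = 0\<close> by (simp add: linear_add[OF linear_fm])
    ultimately show "z \<in> fm Q ` U" by blast
  qed
  have inj0: "\<forall>x\<in>U. fm Q x = 0 \<longrightarrow> x = 0"
  proof clarify
    fix x assume "x \<in> U" "fm Q x = 0"
    then have "x \<in> K" "\<forall>y\<in>K. orthogonal y x" unfolding K_def U_def by auto
    then have "orthogonal x x" by blast
    then show "x = 0" by (simp add: orthogonal_def)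
  qed
  obtain e where e: "e > 0" "\<forall>x\<in>U. e * norm x \<le> norm (fm Q x)"
    using injective_imp_isometric[OF closed_subspace[OF sU] sU bounded_linear_fm inj0] by blast
  define \<delta> where "\<delta> = e / real CARD('n)"
  have dpos: "\<delta> > 0" unfolding \<delta>_def using e(1) by simp
  have "dim (fm Q ` W) \<le> dim (fm Q' ` W)" if "dist Q' Q < \<delta>" for Q'
  proof -
    have z: "\<forall>x\<in>U. fm Q' x = 0 \<longrightarrow> x = 0"
    proof clarify
      fix x assume xU: "x \<in> U" and f0: "fm Q' x = 0"
      show "x = 0"
      proof (rule ccontr)
        assume "x \<noteq> 0"
        then have nx: "norm x > 0" by simp
        have "fm Q x = fm (Q - Q') x" using fm_diff[of Q x Q'] f0 by simp
        then have "norm (fm Q x) \<le> real CARD('n) * (norm x * norm (Q - Q'))"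
          using norm_fm by metis
        also have "norm (Q - Q') < \<delta>" using that by (simp add: dist_norm norm_minus_commute)
        then have "real CARD('n) * (norm x * norm (Q - Q')) < real CARD('n) * (norm x * \<delta>)"
          using nx by simp
        also have "\<dots> = e * norm x" unfolding \<delta>_def by simp
        finally show False using e(2) xU by fastforce
      qed
    qed
    have injU: "inj_on (fm Q') (span U)"
      unfolding sp_eq[OF sU] using linear_inj_on_iff_eq_0[OF linear_fm[of Q'], of U] z sU by simp
    have "dim (fm Q ` W) \<le> dim (fm Q ` U)" using img by (rule dim_subset)
    also have "\<dots> \<le> dim U" by (rule dim_image_le[OF linear_fm])
    also have "\<dots> = dim (fm Q' ` U)" using dim_image_eq[OF linear_fm injU] by simp
    also have "\<dots> \<le> dim (fm Q' ` W)" by (rule dim_subset) (use UW in blast)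
    finally show ?thesis .
  qed
  then show ?thesis unfolding eventually_nhds_metric using dpos by blast
qed

lemma fm_rank1:
  fixes w :: "real^'n" and v :: "real^'d"
  shows "fm (\<chi> i. (w$i / (w \<bullet> w)) *\<^sub>R v) x = ((x \<bullet> w) / (w \<bullet> w)) *\<^sub>R v"
proof -
  have "fm (\<chi> i. (w$i / (w \<bullet> w)) *\<^sub>R v) x = (\<Sum>i\<in>UNIV. (x$i * w$i / (w \<bullet> w)) *\<^sub>R v)"
    unfolding fm_def by (simp add: scaleR_scaleR)
  also have "\<dots> = ((\<Sum>i\<in>UNIV. x$i * w$i) / (w \<bullet> w)) *\<^sub>R v"
    by (simp add: scaleR_sum_left sum_divide_distrib)
  also have "(\<Sum>i\<in>UNIV. x$i * w$i) = x \<bullet> w" by (simp add: inner_vec_def)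
  finally show ?thesis .
qed

lemma step:
  fixes Q :: "(real^'d)^'n"
  assumes W: "subspace W" and lt1: "dim (fm Q ` W) < dim W" and lt2: "dim (fm Q ` W) < CARD('d)"
  shows "\<exists>R. \<forall>t. t \<noteq> 0 \<longrightarrow> dim (fm (Q + t *\<^sub>R R) ` W) = Suc (dim (fm Q ` W))"
proof -
  let ?S = "fm Q ` W"
  have sS: "subspace ?S" by (rule linear_subspace_image[OF linear_fm W])
  have "\<not> inj_on (fm Q) W"
  proof
    assume "inj_on (fm Q) W"
    then have "inj_on (fm Q) (span W)" unfolding sp_eq[OF W] .
    then have "dim ?S = dim W" by (rule dim_image_eq[OF linear_fm])
    then show False using lt1 by simp
  qed
  then obtain w where w: "w \<in> W" "w \<noteq> 0" "fm Q w = 0"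
    using linear_inj_on_iff_eq_0[OF linear_fm[of Q], of W] W by blast
  have "?S \<noteq> UNIV"
  proof
    assume "?S = UNIV"
    then have "dim ?S = CARD('d)" by simp
    then show False using lt2 by simp
  qed
  then obtain v where v: "v \<notin> ?S" by blast
  define R where "R = (\<chi> i. (w$i / (w \<bullet> w)) *\<^sub>R v)"
  have ww: "w \<bullet> w \<noteq> 0" using w(2) by simp
  have fR: "fm R x = ((x \<bullet> w) / (w \<bullet> w)) *\<^sub>R v" for x unfolding R_def by (rule fm_rank1)
  have "dim (fm (Q + t *\<^sub>R R) ` W) = Suc (dim ?S)" if t: "t \<noteq> 0" for t
  proof -
    have f: "fm (Q + t *\<^sub>R R) x = fm Q x + (t * ((x \<bullet> w) / (w \<bullet> w))) *\<^sub>R v" for x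
      by (simp add: fm_add fm_scale fR)
    have eq: "fm (Q + t *\<^sub>R R) ` W = span (insert v ?S)"
    proof (intro subset_antisym subsetI)
      fix z assume "z \<in> fm (Q + t *\<^sub>R R) ` W"
      then obtain x where x: "x \<in> W" "z = fm (Q + t *\<^sub>R R) x" by blast
      have "fm Q x \<in> span (insert v ?S)" using x(1) by (intro span_base) auto
      moreover have "(t * ((x \<bullet> w) / (w \<bullet> w))) *\<^sub>R v \<in> span (insert v ?S)"
        by (intro span_scale span_base) auto
      ultimately show "z \<in> span (insert v ?S)" using x(2) f by (simp add: span_add)
    next
      fix z assume "z \<in> span (insert v ?S)"
      then obtain k where "z - k *\<^sub>R v \<in> span ?S" by (auto simp: span_insert)
      then have "z - k *\<^sub>R v \<in> ?S" using sp_eq[OF sS] by simp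
      then obtain y where y: "y \<in> W" "z - k *\<^sub>R v = fm Q y" by blast
      define \<beta> where "\<beta> = k / t - (y \<bullet> w) / (w \<bullet> w)"
      define x where "x = y + \<beta> *\<^sub>R w"
      have xW: "x \<in> W" unfolding x_def using W y(1) w(1) by (simp add: subspace_add subspace_scale)
      have "fm Q x = fm Q y" unfolding x_def
        by (simp add: linear_add[OF linear_fm] linear_scale[OF linear_fm] w(3))
      moreover have "t * ((x \<bullet> w) / (w \<bullet> w)) = k"
      proof -
        have "x \<bullet> w = y \<bullet> w + \<beta> * (w \<bullet> w)" unfolding x_def by (simp add: inner_add_left)
        then have "(x \<bullet> w) / (w \<bullet> w) = (y \<bullet> w) / (w \<bullet> w) + \<beta>" using ww by (simp add: field_simps)
        then show ?thesis unfolding \<beta>_def using t by (simp add: field_simps)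
      qed
      ultimately have "fm (Q + t *\<^sub>R R) x = z" using f[of x] y(2) by (simp add: algebra_simps)
      then show "z \<in> fm (Q + t *\<^sub>R R) ` W" using xW by blast
    qed
    have "v \<notin> span ?S" unfolding sp_eq[OF sS] by (rule v)
    then have "dim (insert v ?S) = Suc (dim ?S)" by (simp add: dim_insert)
    then show ?thesis unfolding eq dim_span .
  qed
  then show ?thesis by blast
qed

lemma lsc_fin:
  fixes Q :: "(real^'d)^'n"
  assumes fin: "finite \<W>" and sub: "\<forall>W\<in>\<W>. subspace W"
  shows "\<exists>\<delta>>0. \<forall>Q'. dist Q' Q < \<delta> \<longrightarrow> (\<forall>W\<in>\<W>. dim (fm Q ` W) \<le> dim (fm Q' ` W))"
proof -
  have "eventually (\<lambda>Q'. \<forall>W\<in>\<W>. dim (fm Q ` W) \<le> dim (fm Q' ` W)) (nhds Q)"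
    using fin by (rule eventually_ball_finite) (use sub lsc in blast)
  then show ?thesis unfolding eventually_nhds_metric .
qed

lemma dense_good:
  fixes Q0 :: "(real^'d)^'n"
  assumes fin: "finite \<W>" and sub: "\<forall>W\<in>\<W>. subspace W" and e: "e > 0"
  shows "\<exists>Q'. dist Q' Q0 < e \<and> (\<forall>W\<in>\<W>. dim (fm Q' ` W) = min (dim W) CARD('d))"
proof -
  define df where "df Q = (\<Sum>W\<in>\<W>. min (dim W) CARD('d) - dim (fm Q ` W))" for Q :: "(real^'d)^'n"
  have main: "\<forall>Q. dist Q Q0 < e \<longrightarrow> df Q = N \<longrightarrow> (\<exists>Q'. dist Q' Q0 < e \<and> (\<forall>W\<in>\<W>. dim (fm Q' ` W) = min (dim W) CARD('d)))" for N
  proof (induction N rule: less_induct)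
    case (less N)
    show ?case
    proof (intro allI impI)
      fix Q assume dQ: "dist Q Q0 < e" and dfQ: "df Q = N"
      show "\<exists>Q'. dist Q' Q0 < e \<and> (\<forall>W\<in>\<W>. dim (fm Q' ` W) = min (dim W) CARD('d))"
      proof (cases "\<forall>W\<in>\<W>. dim (fm Q ` W) = min (dim W) CARD('d)")
        case True
        then show ?thesis using dQ by blast
      next
        case False
        then obtain W0 where W0: "W0 \<in> \<W>" "dim (fm Q ` W0) \<noteq> min (dim W0) CARD('d)" by blast
        then have lt: "dim (fm Q ` W0) < min (dim W0) CARD('d)" using fm_ub[of Q W0] by linarith
        obtain R where R: "\<And>t. t \<noteq> 0 \<Longrightarrow> dim (fm (Q + t *\<^sub>R R) ` W0) = Suc (dim (fm Q ` W0))"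
          using step[of W0 Q] sub W0(1) lt by auto
        obtain \<delta> where \<delta>: "\<delta> > 0" "\<And>Q'. dist Q' Q < \<delta> \<Longrightarrow> (\<forall>W\<in>\<W>. dim (fm Q ` W) \<le> dim (fm Q' ` W))"
          using lsc_fin[OF fin sub, of Q] by blast
        define \<delta>' where "\<delta>' = min \<delta> (e - dist Q Q0)"
        have d'pos: "\<delta>' > 0" unfolding \<delta>'_def using \<delta>(1) dQ by simp
        define t where "t = \<delta>' / (2 * (norm R + 1))"
        have tpos: "t > 0" unfolding t_def using d'pos by (intro divide_pos_pos) (auto intro: add_nonneg_pos)
        define Q1 where "Q1 = Q + t *\<^sub>R R"
        have "dist Q1 Q = t * norm R" unfolding Q1_def using tpos by (simp add: dist_norm)
        also have "\<dots> < \<delta>'"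
        proof -
          have p: "0 < 2 * (norm R + 1)" by (smt (verit) norm_ge_zero)
          have l1: "norm R / (2 * (norm R + 1)) < 1"
            by (subst pos_divide_less_eq[OF p]) (smt (verit) norm_ge_zero)
          have "t * norm R = \<delta>' * (norm R / (2 * (norm R + 1)))" unfolding t_def by simp
          also from l1 have "\<delta>' * (norm R / (2 * (norm R + 1))) < \<delta>' * 1"
            using d'pos by (intro mult_strict_left_mono) auto
          finally show ?thesis by simp
        qed
        finally have d1: "dist Q1 Q < \<delta>'" .
        then have "dist Q1 Q < \<delta>" unfolding \<delta>'_def by simp
        then have mono: "\<forall>W\<in>\<W>. dim (fm Q ` W) \<le> dim (fm Q1 ` W)" using \<delta>(2) by blast
        have dQ1: "dist Q1 Q0 < e"
          using d1 dist_triangle[of Q1 Q0 Q] unfolding \<delta>'_def by simp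
        have W0s: "dim (fm Q1 ` W0) = Suc (dim (fm Q ` W0))" unfolding Q1_def using R tpos by simp
        have "df Q1 < df Q" unfolding df_def
        proof (rule sum_strict_mono_ex1[OF fin])
          show "\<forall>W\<in>\<W>. min (dim W) CARD('d) - dim (fm Q1 ` W) \<le> min (dim W) CARD('d) - dim (fm Q ` W)"
            using mono by (auto intro: diff_le_mono2)
          show "\<exists>W\<in>\<W>. min (dim W) CARD('d) - dim (fm Q1 ` W) < min (dim W) CARD('d) - dim (fm Q ` W)"
            using W0(1) W0s lt by (intro bexI[of _ W0]) auto
        qed
        then show ?thesis using less.IH[of "df Q1"] dfQ dQ1 by blast
      qed
    qed
  qed
  show ?thesis using main[of "df Q0"] e by (metis dist_self)
qed

lemma dimfm_EE: "dim (fm Q ` WW T) = dim (fm Q ` EE T)"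
proof -
  have "fm Q ` WW T = span (fm Q ` EE T)" unfolding WW_def by (rule linear_span_image[OF linear_fm, symmetric])
  then show ?thesis by (simp only: dim_span)
qed

lemma good_iff:
  fixes Q :: "(real^'d)^'n"
  shows "ideal_dim Q T = min (int CARD('n) - int (num_components T) - 1) (int CARD('d) - 1)
    \<longleftrightarrow> dim (fm Q ` WW T) = min (dim (WW T)) CARD('d)"
proof -
  have "int CARD('n) - int (num_components T) = int (dim (WW T))" using dim_WW[of T] by simp
  then show ?thesis unfolding ideal_dim_fm by (auto simp: min_def)
qed

lemma ub_part:
  fixes Q :: "(real^'d)^'n"
  shows "ideal_dim Q T \<le> min (int CARD('n) - int (num_components T) - 1) (int CARD('d) - 1)"
proof -
  have "int CARD('n) - int (num_components T) = int (dim (WW T))" using dim_WW[of T] by simp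
  then show ?thesis unfolding ideal_dim_fm using fm_ub[of Q "WW T"] by (auto simp: min_def)
qed

lemma inj_from_good:
  fixes Q :: "(real^'d)^'n"
  assumes g: "\<forall>T. is_pair_set T \<longrightarrow> dim (fm Q ` WW T) = min (dim (WW T)) CARD('d)"
  shows "inj (\<lambda>i. Q$i)"
proof (rule injI, rule ccontr)
  fix i j assume eq: "Q$i = Q$j" and ne: "i \<noteq> j"
  define T where "T = {{i,j}}"
  have pT: "is_pair_set T" unfolding T_def is_pair_set_def using ne by auto
  have "fm Q ` EE T \<subseteq> {0}"
  proof
    fix z assume "z \<in> fm Q ` EE T"
    then obtain x where x: "x \<in> EE T" "z = fm Q x" by blast
    have "\<exists>a b. x = axis b 1 - axis a 1 \<and> a \<noteq> b \<and> {a,b} \<in> T" using x(1) unfolding EE_def by (simp only: mem_Collect_eq)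
    then obtain a b where ab: "x = axis b 1 - axis a 1" "{a,b} = {i,j}" unfolding T_def by auto
    then have "(a = i \<and> b = j) \<or> (a = j \<and> b = i)" by (simp add: doubleton_eq_iff)
    then have "Q$b - Q$a = 0" using eq by auto
    then show "z \<in> {0}" using x(2) ab(1) by (simp add: fm_axis)
  qed
  then have "dim (fm Q ` WW T) = 0" unfolding dimfm_EE by simp
  moreover have "dim (WW T) \<noteq> 0"
  proof
    assume "dim (WW T) = 0"
    then have "WW T \<subseteq> {0}" by simp
    moreover have "axis j 1 - axis i 1 \<in> EE T" unfolding EE_def T_def mem_Collect_eq
      using ne by (intro exI[of _ i] exI[of _ j]) simp
    then have "axis j 1 - axis i 1 \<in> WW T" unfolding WW_def by (rule span_base)
    ultimately have "(axis j 1 - axis i 1 :: real^'n) = 0" by blast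
    then have "(axis j 1 - axis i 1 :: real^'n) $ j = 0" by simp
    moreover have "(axis j 1 - axis i 1 :: real^'n) $ j = 1" using ne by (simp add: axis_def)
    ultimately show False by simp
  qed
  moreover have "CARD('d) \<noteq> 0" by simp
  moreover have "dim (fm Q ` WW T) = min (dim (WW T)) CARD('d)" using g pT by blast
  ultimately show False by linarith
qed

lemma star_span:
  fixes a :: "'n::finite"
  assumes aJ: "a \<notin> J"
  shows "span (EE {{a,j} | j. j \<in> J}) = span ((\<lambda>j. axis j 1 - axis a 1 :: real^'n) ` J)"
proof -
  let ?T = "{{a,j} | j. j \<in> J}"
  let ?E = "(\<lambda>j. axis j 1 - axis a 1 :: real^'n) ` J"
  have 1: "EE ?T \<subseteq> span ?E"
  proof
    fix x assume "x \<in> EE ?T"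
    then have "\<exists>u v. x = axis v 1 - axis u 1 \<and> u \<noteq> v \<and> {u,v} \<in> ?T" unfolding EE_def by (simp only: mem_Collect_eq)
    then obtain u v j where uv: "x = axis v 1 - axis u 1" "{u,v} = {a,j}" "j \<in> J" by blast
    then have "(u = a \<and> v = j) \<or> (u = j \<and> v = a)" by (simp add: doubleton_eq_iff)
    then show "x \<in> span ?E"
    proof
      assume "u = a \<and> v = j"
      then have "x \<in> ?E" using uv by blast
      then show ?thesis by (rule span_base)
    next
      assume "u = j \<and> v = a"
      then have xe: "x = - (axis j 1 - axis a 1)" using uv by simp
      have "axis j 1 - axis a 1 \<in> span ?E" using uv(3) by (intro span_base) blast
      then have "- (axis j 1 - axis a 1) \<in> span ?E" by (rule span_neg)
      then show ?thesis unfolding xe .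
    qed
  qed
  have 2: "?E \<subseteq> span (EE ?T)"
  proof
    fix x assume "x \<in> ?E"
    then obtain j where j: "j \<in> J" "x = axis j 1 - axis a 1" by blast
    then have "a \<noteq> j" using aJ by blast
    then have "x \<in> EE ?T" unfolding EE_def mem_Collect_eq using j
      by (intro exI[of _ a] exI[of _ j]) auto
    then show "x \<in> span (EE ?T)" by (rule span_base)
  qed
  show ?thesis using 1 2 span_eq by blast
qed

lemma star_indep:
  fixes a :: "'n::finite"
  assumes aJ: "a \<notin> J"
  shows "independent ((\<lambda>j. axis j 1 - axis a 1 :: real^'n) ` J)"
    and "card ((\<lambda>j. axis j 1 - axis a 1 :: real^'n) ` J) = card J"
proof -
  define g where "g j = (axis j 1 - axis a 1 :: real^'n)" for j
  have gc: "g j $ k = (if k = j then 1 else 0) - (if k = a then 1 else 0)" for j k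
    unfolding g_def by (simp add: axis_def)
  have inj: "inj_on g J"
  proof (rule inj_onI)
    fix j k assume "j \<in> J" "k \<in> J" "g j = g k"
    then have "g j $ j = g k $ j" by simp
    then show "j = k" using gc[of j j] gc[of k j] \<open>j \<in> J\<close> aJ by (auto split: if_splits)
  qed
  show "card ((\<lambda>j. axis j 1 - axis a 1 :: real^'n) ` J) = card J"
    using card_image[OF inj] unfolding g_def .
  have "independent (g ` J)"
  proof (rule independent_if_scalars_zero)
    show "finite (g ` J)" by simp
    fix f x assume s: "(\<Sum>x\<in>g ` J. f x *\<^sub>R x) = 0" and x: "x \<in> g ` J"
    then obtain j0 where j0: "j0 \<in> J" "x = g j0" by blast
    have "(\<Sum>j\<in>J. f (g j) *\<^sub>R g j) = 0" using s sum.reindex[OF inj, of "\<lambda>x. f x *\<^sub>R x"] by simp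
    then have "(\<Sum>j\<in>J. f (g j) *\<^sub>R g j) $ j0 = 0" by simp
    then have "(\<Sum>j\<in>J. f (g j) * (g j $ j0)) = 0" by simp
    moreover have "(\<Sum>j\<in>J. f (g j) * (g j $ j0)) = (\<Sum>j\<in>J. if j = j0 then f (g j) else 0)"
    proof (rule sum.cong)
      fix j assume "j \<in> J"
      have "j0 \<noteq> a" using j0(1) aJ by blast
      then show "f (g j) * (g j $ j0) = (if j = j0 then f (g j) else 0)" using gc[of j j0] by auto
    qed simp
    moreover have "(\<Sum>j\<in>J. if j = j0 then f (g j) else 0) = f (g j0)" using j0(1) by simp
    ultimately show "f x = 0" using j0(2) by simp
  qed
  then show "independent ((\<lambda>j. axis j 1 - axis a 1 :: real^'n) ` J)" unfolding g_def .
qed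

lemma simple_from_good:
  fixes Q :: "(real^'d)^'n"
  assumes inj: "inj (\<lambda>i. Q$i)"
    and g: "\<forall>T. is_pair_set T \<longrightarrow> dim (fm Q ` WW T) = min (dim (WW T)) CARD('d)"
  shows "simple_position Q"
  unfolding simple_position_def
proof (intro allI impI)
  fix I :: "'n set" assume cI: "card I \<le> CARD('d) + 1"
  show "\<not> affine_dependent ((\<lambda>i. Q $ i) ` I)"
  proof (cases "I = {}")
    case True then show ?thesis by simp
  next
    case False
    then obtain a where aI: "a \<in> I" by blast
    define J where "J = I - {a}"
    have aJ: "a \<notin> J" unfolding J_def by blast
    have cJ: "card J \<le> CARD('d)" unfolding J_def using cI aI by (simp add: card_Diff_singleton)
    define T where "T = {{a,j} | j. j \<in> J}"
    have pT: "is_pair_set T" unfolding is_pair_set_def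
    proof
      fix e assume "e \<in> T"
      then obtain j where "j \<in> J" "e = {a,j}" unfolding T_def by auto
      moreover then have "a \<noteq> j" using aJ by auto
      ultimately show "\<exists>i j. i \<noteq> j \<and> e = {i, j}" by auto
    qed
    let ?E = "(\<lambda>j. axis j 1 - axis a 1 :: real^'n) ` J"
    have WWT: "WW T = span ?E" unfolding WW_def T_def using star_span[OF aJ] .
    have dW: "dim (WW T) = card J"
      unfolding WWT dim_span using dim_eq_card_independent[OF star_indep(1)[OF aJ]] star_indep(2)[OF aJ] by simp
    define D where "D = (\<lambda>j. Q$j - Q$a) ` J"
    have fE: "fm Q ` ?E = D" unfolding D_def image_image by (simp add: fm_axis)
    have "fm Q ` WW T = span D" unfolding WWT fE[symmetric] by (rule linear_span_image[OF linear_fm, symmetric])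
    then have "dim D = dim (fm Q ` WW T)" by simp
    also have "\<dots> = min (dim (WW T)) CARD('d)" using g pT by blast
    also have "\<dots> = card J" using dW cJ by simp
    finally have dD: "dim D = card J" .
    have fD: "finite D" unfolding D_def by (rule finite_imageI) simp
    have "card D \<le> card J" unfolding D_def by (rule card_image_le) simp
    moreover have "dim D \<le> card D" using dim_le_card[OF span_superset fD] .
    ultimately have cD: "card D = dim D" using dD by simp
    have indD: "independent D" using card_eq_dim[OF subset_refl cD fD] span_superset by blast
    have QI: "(\<lambda>i. Q $ i) ` I = insert (Q$a) ((\<lambda>i. Q $ i) ` J)" unfolding J_def using aI by blast
    have nQ: "Q$a \<notin> (\<lambda>i. Q $ i) ` J" using inj aJ by (auto dest: injD)
    have "(\<lambda>x. - Q$a + x) ` (\<lambda>i. Q $ i) ` J = D" unfolding D_def image_image by simp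
    then show ?thesis unfolding QI using affine_dependent_iff_dependent[OF nQ] indD by simp
  qed
qed

theorem lemma5p5:
  shows "(\<forall>(Q::(real^'d)^'n) T. inj (\<lambda>i. Q $ i) \<and> is_pair_set T \<longrightarrow>
            ideal_dim Q T \<le> min (int CARD('n) - int (num_components T) - 1) (int CARD('d) - 1))
       \<and> (let G = {Q::(real^'d)^'n. inj (\<lambda>i. Q $ i) \<and>
                    (\<forall>T. is_pair_set T \<longrightarrow>
                       ideal_dim Q T = min (int CARD('n) - int (num_components T) - 1) (int CARD('d) - 1))}
          in open G \<and> closure G = UNIV \<and> (\<forall>Q\<in>G. simple_position Q))"
proof -
  define PS where "PS = {T :: 'n set set. is_pair_set T}"
  define \<W> where "\<W> = WW ` PS"
  have fin: "finite \<W>" unfolding \<W>_def by simp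
  have sub: "\<forall>W\<in>\<W>. subspace W" unfolding \<W>_def WW_def by (auto intro: subspace_span)
  define G' where "G' = {Q::(real^'d)^'n. \<forall>W\<in>\<W>. dim (fm Q ` W) = min (dim W) CARD('d)}"
  have G'alt: "Q \<in> G' \<longleftrightarrow> (\<forall>T. is_pair_set T \<longrightarrow> dim (fm Q ` WW T) = min (dim (WW T)) CARD('d))" for Q
    unfolding G'_def \<W>_def PS_def by blast
  have GG: "{Q::(real^'d)^'n. inj (\<lambda>i. Q $ i) \<and>
                    (\<forall>T. is_pair_set T \<longrightarrow>
                       ideal_dim Q T = min (int CARD('n) - int (num_components T) - 1) (int CARD('d) - 1))} = G'"
    unfolding good_iff using G'alt inj_from_good by blast
  have op: "open G'"
    unfolding open_dist
  proof (intro ballI)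
    fix Q assume Q: "Q \<in> G'"
    obtain \<delta> where \<delta>: "\<delta> > 0" "\<forall>Q'. dist Q' Q < \<delta> \<longrightarrow> (\<forall>W\<in>\<W>. dim (fm Q ` W) \<le> dim (fm Q' ` W))"
      using lsc_fin[OF fin sub, of Q] by blast
    have "Q' \<in> G'" if "dist Q' Q < \<delta>" for Q'
      unfolding G'_def
    proof (intro CollectI ballI)
      fix W assume W: "W \<in> \<W>"
      have "dim (fm Q ` W) \<le> dim (fm Q' ` W)" using \<delta>(2) that W by blast
      moreover have "dim (fm Q ` W) = min (dim W) CARD('d)" using Q W unfolding G'_def by blast
      moreover have "dim (fm Q' ` W) \<le> min (dim W) CARD('d)" by (rule fm_ub)
      ultimately show "dim (fm Q' ` W) = min (dim W) CARD('d)" by linarith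
    qed
    then show "\<exists>e>0. \<forall>y. dist y Q < e \<longrightarrow> y \<in> G'" using \<delta>(1) by blast
  qed
  have cl: "closure G' = UNIV"
  proof (intro set_eqI iffI)
    fix x :: "(real^'d)^'n"
    show "x \<in> closure G'"
      unfolding closure_approachable
    proof (intro allI impI)
      fix e :: real assume "e > 0"
      then obtain Q' where "dist Q' x < e" "\<forall>W\<in>\<W>. dim (fm Q' ` W) = min (dim W) CARD('d)"
        using dense_good[OF fin sub] by blast
      then show "\<exists>y\<in>G'. dist y x < e" unfolding G'_def by blast
    qed
  qed simp
  have sp: "\<forall>Q\<in>G'. simple_position Q"
  proof
    fix Q assume "Q \<in> G'"
    then have g: "\<forall>T. is_pair_set T \<longrightarrow> dim (fm Q ` WW T) = min (dim (WW T)) CARD('d)"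
      using G'alt by blast
    show "simple_position Q" by (rule simple_from_good[OF inj_from_good[OF g] g])
  qed
  have part1: "\<forall>(Q::(real^'d)^'n) T. inj (\<lambda>i. Q $ i) \<and> is_pair_set T \<longrightarrow>
            ideal_dim Q T \<le> min (int CARD('n) - int (num_components T) - 1) (int CARD('d) - 1)"
    using ub_part by blast
  show ?thesis unfolding Let_def GG using part1 op cl sp by blast
qed

end
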